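(* Let $n \ge 2$, let $A$ be an $n \times n$ real matrix with $\mathrm{Tr}(AA^t) = n$, let $O$ be distributed according to Haar measure on $O(n,\mathbb{R})$, and let $W = \mathrm{Tr}(AO)$. Let $f:\mathbb{R}\to\mathbb{R}$ be a twice differentiable function with bounded second derivative. Then \[ \mathbb{E}[f'(W) - Wf(W)] = \mathbb{E}\left[ \frac{p_2(AO) - 1}{n-1} f'(W) \right], \] where $p_2(AO) = \mathrm{Tr}((AO)^2)$. *)

theory Defs
  imports "HOL-Probability.Probability"
begin

text \<open>Haar (probability) measure on the orthogonal group O(n), viewed as a Borel
probability measure on the space of n x n real matrices that is concentrated on
the orthogonal matrices and invariant under left multiplication by any
orthogonal matrix (this characterizes the normalized Haar measure uniquely).\<close>

definition haar_orthogonal :: "(real^'n^'n) measure \<Rightarrow> bool" where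
  "haar_orthogonal M \<longleftrightarrow>
     prob_space M \<and> sets M = sets borel \<and>
     (AE U in M. orthogonal_matrix U) \<and>
     (\<forall>Q::real^'n^'n. orthogonal_matrix Q \<longrightarrow> distr M borel (\<lambda>U. Q ** U) = M)"

end

theory Submission
  imports Defs
begin

definition Emat :: "'n::finite \<Rightarrow> 'n \<Rightarrow> real^'n^'n" where
  "Emat i j = (\<chi> a b. if a = i \<and> b = j then 1 else 0)"

lemma Emat_mult: "Emat i j ** Emat k l = (if j = k then Emat i l else 0)"
proof -
  have "(\<Sum>c\<in>UNIV. (if a = i \<and> c = j then 1 else 0) * (if c = k \<and> b = l then 1 else (0::real)))
      = (if j = k \<and> a = i \<and> b = l then 1 else 0)" for a b
  proof -
    have "(\<Sum>c\<in>UNIV. (if a = i \<and> c = j then 1 else 0) * (if c = k \<and> b = l then 1 else (0::real)))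
        = (\<Sum>c\<in>UNIV. if c = j then (if a = i \<and> j = k \<and> b = l then 1 else 0) else 0)"
      by (rule sum.cong) auto
    also have "\<dots> = (if j = k \<and> a = i \<and> b = l then 1 else 0)" by (simp add: sum.delta)
    finally show ?thesis .
  qed
  then show ?thesis
    by (simp add: Emat_def matrix_matrix_mult_def vec_eq_iff)
qed

lemma if_conj_zero: "(if a = b \<and> P then (c::real) else 0) = (if a = b then (if P then c else 0) else 0)"
  by auto

lemma trace_Emat: "trace (X ** Emat i j) = X $ j $ i"
proof -
  have "(\<Sum>c\<in>UNIV. X $ a $ c * (if c = i \<and> a = j then 1 else 0))
      = (if a = j then X $ a $ i else 0)" for a
  proof -
    have "(\<Sum>c\<in>UNIV. X $ a $ c * (if c = i \<and> a = j then 1 else 0))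
      = (\<Sum>c\<in>UNIV. if c = i then (if a = j then X $ a $ i else 0) else 0)"
      by (rule sum.cong) auto
    then show ?thesis by (simp add: sum.delta)
  qed
  then show ?thesis
    by (simp add: Emat_def matrix_matrix_mult_def trace_def sum.delta)
qed

lemma matrix_add_rdistrib: "((B + C) ** A) = (B ** A) + (C ** (A::real^'n^'n))"
  by (simp add: matrix_matrix_mult_def vec_eq_iff sum.distrib[symmetric] algebra_simps)
lemma matrix_diff_rdistrib: "((B - C) ** A) = (B ** A) - (C ** (A::real^'n^'n))"
  by (simp add: matrix_matrix_mult_def vec_eq_iff sum_subtractf[symmetric] algebra_simps)
lemma matrix_neg_left: "(- B) ** A = - (B ** (A::real^'n^'n))"
  by (simp add: matrix_matrix_mult_def vec_eq_iff sum_negf[symmetric])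
lemma matrix_neg_right: "A ** (- B) = - (A ** (B::real^'n^'n))"
  by (simp add: matrix_matrix_mult_def vec_eq_iff sum_negf[symmetric])
lemma transpose_add: "transpose (A + B) = transpose A + transpose (B::real^'n^'n)"
  by (simp add: transpose_def vec_eq_iff)
lemma transpose_neg: "transpose (- A) = - transpose (A::real^'n^'n)"
  by (simp add: transpose_def vec_eq_iff)

definition Rm :: "real^'n^'n \<Rightarrow> real \<Rightarrow> real^'n^'n" where
  "Rm K t = mat 1 + sin t *\<^sub>R K + (1 - cos t) *\<^sub>R (K ** K)"

context
  fixes K :: "real^'n^'n"
  assumes sk: "transpose K = - K" and cub: "K ** (K ** K) = - K"
begin

definition lc :: "real \<Rightarrow> real \<Rightarrow> real \<Rightarrow> real^'n^'n" where
  "lc a b c = a *\<^sub>R mat 1 + b *\<^sub>R K + c *\<^sub>R (K ** K)"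

lemma c3: "(K ** K) ** K = - K" by (metis cub matrix_mul_assoc)
lemma q2: "(K ** K) ** (K ** K) = - (K ** K)"
  by (metis cub matrix_mul_assoc matrix_neg_left)

lemma lc_I: "lc a b c ** mat 1 = lc a b c" by simp

lemma lc_K: "lc a b c ** K = lc 0 (a - c) b"
  unfolding lc_def
  by (simp add: matrix_add_rdistrib scalar_matrix_assoc[symmetric] c3 vec_eq_iff algebra_simps)

lemma lc_K2: "lc a b c ** (K ** K) = lc 0 (- b) (a - c)"
  by (simp add: matrix_mul_assoc lc_K)

lemma lc_mult: "lc a b c ** lc a' b' c' = lc (a * a') (a * b' + b * a' - b * c' - c * b')
     (a * c' + c * a' + b * b' - c * c')"
proof -
  have "lc a b c ** lc a' b' c' = a' *\<^sub>R (lc a b c ** mat 1) + b' *\<^sub>R (lc a b c ** K)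
        + c' *\<^sub>R (lc a b c ** (K ** K))"
    by (subst (2) lc_def) (simp add: matrix_add_ldistrib matrix_scalar_ac scalar_matrix_assoc[symmetric])
  also have "\<dots> = lc (a * a') (a * b' + b * a' - b * c' - c * b') (a * c' + c * a' + b * b' - c * c')"
    unfolding lc_I lc_K lc_K2 by (simp add: lc_def vec_eq_iff algebra_simps)
  finally show ?thesis .
qed

lemma tK2: "transpose (K ** K) = K ** K"
  by (simp add: matrix_transpose_mul sk matrix_neg_left matrix_neg_right)

lemma Rm_lc: "Rm K t = lc 1 (sin t) (1 - cos t)"
  by (simp add: Rm_def lc_def)

lemma Rm_orth: "orthogonal_matrix (Rm K t)"
proof -
  have tR: "transpose (lc 1 (sin t) (1 - cos t)) = lc 1 (- sin t) (1 - cos t)"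
    by (simp add: lc_def transpose_add transpose_scalar sk tK2 transpose_neg)
  have e: "1 * (1 - cos t) + (1 - cos t) * 1 + - sin t * sin t - (1 - cos t) * (1 - cos t) = 0"
    using sin_cos_squared_add[of t] by (simp add: power2_eq_square algebra_simps)
  have b0: "1 * sin t + - sin t * 1 - - sin t * (1 - cos t) - (1 - cos t) * sin t = 0"
    by (simp add: algebra_simps)
  have "transpose (Rm K t) ** Rm K t = lc 1 0 0"
    unfolding Rm_lc tR lc_mult by (simp only: e b0, simp)
  then show ?thesis by (simp add: orthogonal_matrix lc_def)
qed

end

lemma trace_scaleR: "trace (c *\<^sub>R (A::real^'n^'n)) = c * trace A"
  by (simp add: trace_def sum_distrib_left)

lemma trace_Rm:
  fixes X K U :: "real^'n^'n"
  shows "trace (X ** (Rm K t ** U)) = trace (X ** U) + sin t * trace (X ** K ** U)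
     + (1 - cos t) * trace (X ** (K ** K) ** U)"
proof -
  have "X ** Rm K t = X + sin t *\<^sub>R (X ** K) + (1 - cos t) *\<^sub>R (X ** (K ** K))"
    by (simp add: Rm_def matrix_add_ldistrib matrix_scalar_ac scalar_matrix_assoc[symmetric])
  then have "X ** (Rm K t ** U) = (X + sin t *\<^sub>R (X ** K) + (1 - cos t) *\<^sub>R (X ** (K ** K))) ** U"
    by (simp only: matrix_mul_assoc)
  also have "\<dots> = X ** U + sin t *\<^sub>R (X ** K ** U) + (1 - cos t) *\<^sub>R (X ** (K ** K) ** U)"
    by (simp only: matrix_add_rdistrib scalar_matrix_assoc[symmetric])
  finally have "X ** (Rm K t ** U) = X ** U + sin t *\<^sub>R (X ** K ** U) + (1 - cos t) *\<^sub>R (X ** (K ** K) ** U)" .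
  then show ?thesis by (simp add: trace_add trace_scaleR)
qed



definition xx :: "real \<Rightarrow> real \<Rightarrow> real \<Rightarrow> real \<Rightarrow> real" where
  "xx w p q t = w + sin t * p + (1 - cos t) * q"
definition yy :: "real \<Rightarrow> real \<Rightarrow> real \<Rightarrow> real" where
  "yy p q t = p + sin t * q - (1 - cos t) * p"
definition phi :: "(real \<Rightarrow> real) \<Rightarrow> real \<Rightarrow> real \<Rightarrow> real \<Rightarrow> real \<Rightarrow> real" where
  "phi f w p q t = f (xx w p q t) * yy p q t"

lemma phi_deriv:
  assumes df: "\<And>x. (f has_real_derivative f' x) (at x)"
  shows "(phi f w p q has_real_derivative
     (f' (xx w p q s) * (cos s * p + sin s * q) * yy p q s + f (xx w p q s) * (cos s * q - sin s * p))) (at s)"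
proof -
  have dx: "((xx w p q) has_real_derivative (cos s * p + sin s * q)) (at s)"
    unfolding xx_def by (auto intro!: derivative_eq_intros)
  have dy: "((yy p q) has_real_derivative (cos s * q - sin s * p)) (at s)"
    unfolding yy_def by (auto intro!: derivative_eq_intros simp: algebra_simps)
  have dfx: "((\<lambda>t. f (xx w p q t)) has_real_derivative f' (xx w p q s) * (cos s * p + sin s * q)) (at s)"
    by (rule DERIV_chain2[OF df dx])
  show ?thesis
    unfolding phi_def[abs_def]
    using DERIV_mult[OF dfx dy] by (simp add: algebra_simps)
qed

lemma phi_lim:
  assumes df: "\<And>x. (f has_real_derivative f' x) (at x)"
  shows "(\<lambda>k. (phi f w p q (inverse (real (Suc k))) - phi f w p q 0) / inverse (real (Suc k)))
     \<longlonglongrightarrow> f' w * p * p + f w * q"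
proof -
  have d: "(phi f w p q has_real_derivative (f' w * p * p + f w * q)) (at 0)"
    using phi_deriv[OF df, of w p q 0] by (simp add: xx_def yy_def)
  then have l: "((\<lambda>y. (phi f w p q y - phi f w p q 0) / (y - 0)) \<longlongrightarrow> f' w * p * p + f w * q) (at 0)"
    using has_field_derivative_iff by blast
  have t: "filterlim (\<lambda>k. inverse (real (Suc k))) (at 0) sequentially"
    unfolding filterlim_at using LIMSEQ_inverse_real_of_nat by auto
  show ?thesis using filterlim_compose[OF l t] by simp
qed

lemma absmul_le: "\<bar>a\<bar> \<le> 1 \<Longrightarrow> \<bar>b\<bar> \<le> (C::real) \<Longrightarrow> \<bar>a * b\<bar> \<le> C"
  by (simp add: abs_mult) (metis abs_ge_zero mult_left_le_one_le order_trans)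

lemma absmul_le2: "\<bar>a\<bar> \<le> 2 \<Longrightarrow> \<bar>b\<bar> \<le> (C::real) \<Longrightarrow> \<bar>a * b\<bar> \<le> 2 * C"
  by (simp add: abs_mult mult_mono')

lemma phi_bound:
  assumes df: "\<And>x. (f has_real_derivative f' x) (at x)"
    and df': "\<And>x. (f' has_real_derivative f'' x) (at x)"
  shows "\<exists>B. \<forall>w p q t. \<bar>w\<bar> \<le> C \<longrightarrow> \<bar>p\<bar> \<le> C \<longrightarrow> \<bar>q\<bar> \<le> C \<longrightarrow> 0 < t \<longrightarrow>
     \<bar>(phi f w p q t - phi f w p q 0) / t\<bar> \<le> B"
proof -
  have cf: "continuous_on UNIV f" using df
    by (meson DERIV_isCont continuous_at_imp_continuous_on)
  have cf': "continuous_on UNIV f'" using df'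
    by (meson DERIV_isCont continuous_at_imp_continuous_on)
  obtain F0 where F0: "\<And>x. x \<in> {-4*C..4*C} \<Longrightarrow> \<bar>f x\<bar> \<le> F0"
    using compact_imp_bounded[OF compact_continuous_image[OF continuous_on_subset[OF cf] compact_Icc]]
    unfolding bounded_real by blast
  obtain F1 where F1: "\<And>x. x \<in> {-4*C..4*C} \<Longrightarrow> \<bar>f' x\<bar> \<le> F1"
    using compact_imp_bounded[OF compact_continuous_image[OF continuous_on_subset[OF cf'] compact_Icc]]
    unfolding bounded_real by blast
  show ?thesis
  proof (intro exI allI impI)
    fix w p q t :: real
    assume w: "\<bar>w\<bar> \<le> C" and p: "\<bar>p\<bar> \<le> C" and q: "\<bar>q\<bar> \<le> C" and t: "0 < t"
    define D where "D s = f' (xx w p q s) * (cos s * p + sin s * q) * yy p q s + f (xx w p q s) * (cos s * q - sin s * p)" for s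
    have "\<exists>z. 0 < z \<and> z < t \<and> phi f w p q t - phi f w p q 0 = (t - 0) * D z"
      by (rule MVT2[OF t]) (unfold D_def, rule phi_deriv[OF df])
    then obtain z where z: "phi f w p q t - phi f w p q 0 = (t - 0) * D z" by blast
    have sc: "\<bar>sin z\<bar> \<le> 1" "\<bar>cos z\<bar> \<le> 1" by auto
    have C0: "0 \<le> C" using w by linarith
    have b1: "\<bar>1 - cos z\<bar> \<le> 2" using sc by linarith
    have h1: "\<bar>sin z * p\<bar> \<le> C" using sc p by (auto intro: absmul_le)
    have h2: "\<bar>(1 - cos z) * q\<bar> \<le> 2 * C" using b1 q by (rule absmul_le2)
    have h3: "\<bar>sin z * q\<bar> \<le> C" using sc q by (auto intro: absmul_le)
    have h4: "\<bar>(1 - cos z) * p\<bar> \<le> 2 * C" using b1 p by (rule absmul_le2)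
    have h5: "\<bar>cos z * q\<bar> \<le> C" using sc q by (auto intro: absmul_le)
    have h6: "\<bar>cos z * p\<bar> \<le> C" using sc p by (auto intro: absmul_le)
    have xb: "\<bar>xx w p q z\<bar> \<le> 4 * C"
      using w h1 h2 abs_triangle_ineq[of "w + sin z * p" "(1 - cos z) * q"]
        abs_triangle_ineq[of w "sin z * p"] C0 unfolding xx_def by linarith
    have yb: "\<bar>yy p q z\<bar> \<le> 4 * C"
      using p h3 h4 abs_triangle_ineq4[of "p + sin z * q" "(1 - cos z) * p"]
        abs_triangle_ineq[of p "sin z * q"] C0 unfolding yy_def by linarith
    have db1: "\<bar>cos z * p + sin z * q\<bar> \<le> 2 * C"
      using h6 h3 abs_triangle_ineq[of "cos z * p" "sin z * q"] by linarith
    have db2: "\<bar>cos z * q - sin z * p\<bar> \<le> 2 * C"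
      using h5 h1 abs_triangle_ineq4[of "cos z * q" "sin z * p"] by linarith
    have F0nn: "0 \<le> F0" using F0[of 0] C0 by force
    have F1nn: "0 \<le> F1" using F1[of 0] C0 by force
    have fx: "\<bar>f (xx w p q z)\<bar> \<le> F0" using xb by (intro F0) (auto simp: abs_le_iff)
    have f'x: "\<bar>f' (xx w p q z)\<bar> \<le> F1" using xb by (intro F1) (auto simp: abs_le_iff)
    have "\<bar>D z\<bar> \<le> F1 * (2 * C) * (4 * C) + F0 * (2 * C)"
    proof -
      have "\<bar>D z\<bar> \<le> \<bar>f' (xx w p q z)\<bar> * \<bar>cos z * p + sin z * q\<bar> * \<bar>yy p q z\<bar>
          + \<bar>f (xx w p q z)\<bar> * \<bar>cos z * q - sin z * p\<bar>"
        unfolding D_def by (simp add: abs_mult[symmetric] abs_triangle_ineq)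
      also have "\<dots> \<le> F1 * (2 * C) * (4 * C) + F0 * (2 * C)"
        using F0nn F1nn C0 by (intro add_mono mult_mono f'x fx db1 db2 yb) auto
      finally show ?thesis .
    qed
    then show "\<bar>(phi f w p q t - phi f w p q 0) / t\<bar> \<le> F1 * (2 * C) * (4 * C) + F0 * (2 * C)"
      using z t by simp
  qed
qed



lemma orth_entry:
  fixes U :: "real^'n^'n"
  assumes "orthogonal_matrix U"
  shows "\<bar>U $ i $ j\<bar> \<le> 1"
proof -
  have "(U ** transpose U) $ i $ i = 1" using assms by (simp add: orthogonal_matrix_def mat_def)
  then have s: "(\<Sum>k\<in>UNIV. U $ i $ k * U $ i $ k) = 1"
    by (simp add: matrix_matrix_mult_def transpose_def)
  have "U $ i $ j * U $ i $ j \<le> (\<Sum>k\<in>UNIV. U $ i $ k * U $ i $ k)"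
    by (rule member_le_sum) auto
  then have "(U $ i $ j)^2 \<le> 1" using s by (simp add: power2_eq_square)
  then show ?thesis by (simp add: abs_square_le_1)
qed

definition nrm :: "real^'n^'n \<Rightarrow> real" where
  "nrm X = (\<Sum>i\<in>UNIV. \<Sum>k\<in>UNIV. \<bar>X $ i $ k\<bar>)"

lemma trace_eq: "trace (X ** (U::real^'n^'n)) = (\<Sum>i\<in>UNIV. \<Sum>k\<in>UNIV. X $ i $ k * U $ k $ i)"
  by (simp add: trace_def matrix_matrix_mult_def)

lemma trace_bound:
  fixes U X :: "real^'n^'n"
  assumes "orthogonal_matrix U"
  shows "\<bar>trace (X ** U)\<bar> \<le> nrm X"
proof -
  have "\<bar>trace (X ** U)\<bar> \<le> (\<Sum>i\<in>UNIV. \<bar>\<Sum>k\<in>UNIV. X $ i $ k * U $ k $ i\<bar>)"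
    unfolding trace_eq by (rule sum_abs)
  also have "\<dots> \<le> (\<Sum>i\<in>UNIV. \<Sum>k\<in>UNIV. \<bar>X $ i $ k * U $ k $ i\<bar>)"
    by (intro sum_mono sum_abs)
  also have "\<dots> \<le> nrm X" unfolding nrm_def
    by (intro sum_mono) (simp add: abs_mult mult_left_le orth_entry[OF assms])
  finally show ?thesis .
qed

lemma cont_trace: "continuous_on UNIV (\<lambda>U::real^'n^'n. trace (X ** U))"
  unfolding trace_eq by (intro continuous_intros)

lemma cont_mult: "continuous_on UNIV (\<lambda>U::real^'n^'n. Q ** U)"
  unfolding matrix_matrix_mult_def by (intro continuous_intros)

lemma cont_bound:
  fixes g :: "real \<Rightarrow> real"
  assumes "continuous_on UNIV g"
  shows "\<exists>F. \<forall>x. \<bar>x\<bar> \<le> R \<longrightarrow> \<bar>g x\<bar> \<le> F"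
proof -
  obtain F where F: "\<And>x. x \<in> {-R..R} \<Longrightarrow> \<bar>g x\<bar> \<le> F"
    using compact_imp_bounded[OF compact_continuous_image[OF continuous_on_subset[OF assms] compact_Icc]]
    unfolding bounded_real by blast
  have "\<forall>x. \<bar>x\<bar> \<le> R \<longrightarrow> \<bar>g x\<bar> \<le> F"
  proof (intro allI impI)
    fix x :: real assume "\<bar>x\<bar> \<le> R"
    then have "x \<in> {-R..R}" by (auto simp: abs_le_iff)
    then show "\<bar>g x\<bar> \<le> F" by (rule F)
  qed
  then show ?thesis by blast
qed

lemma nrm_nonneg: "0 \<le> nrm X" unfolding nrm_def by (intro sum_nonneg) auto

context
  fixes A :: "real^'n^'n" and M :: "(real^'n^'n) measure" and f f' f'' :: "real \<Rightarrow> real"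
  assumes haar: "haar_orthogonal M"
    and df: "\<And>x. (f has_real_derivative f' x) (at x)"
    and df': "\<And>x. (f' has_real_derivative f'' x) (at x)"
begin

lemma Mprob: "prob_space M" using haar by (simp add: haar_orthogonal_def)
lemma sets_M: "sets M = sets borel" using haar by (simp add: haar_orthogonal_def)
lemma AE_orth: "AE U in M. orthogonal_matrix U" using haar by (simp add: haar_orthogonal_def)
lemma distr_inv: "orthogonal_matrix Q \<Longrightarrow> distr M borel (\<lambda>U. Q ** U) = M"
  using haar by (simp add: haar_orthogonal_def)

lemma meas_M: assumes "g \<in> measurable borel N" shows "g \<in> measurable M N"
  using assms measurable_cong_sets[OF sets_M refl, of N] by simp

lemma meas_trace[measurable]: "(\<lambda>U. trace (X ** U)) \<in> borel_measurable M"
  by (intro meas_M borel_measurable_continuous_onI cont_trace)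

lemma cf: "continuous_on UNIV f" using df
  by (meson DERIV_isCont continuous_at_imp_continuous_on)
lemma cf': "continuous_on UNIV f'" using df'
  by (meson DERIV_isCont continuous_at_imp_continuous_on)
lemma f_meas[measurable]: "f \<in> borel_measurable borel"
  by (intro borel_measurable_continuous_onI cf)
lemma f'_meas[measurable]: "f' \<in> borel_measurable borel"
  by (intro borel_measurable_continuous_onI cf')

lemma invariance:
  assumes Q: "orthogonal_matrix Q" and G: "G \<in> borel_measurable borel"
  shows "(\<integral>U. G (Q ** U) \<partial>M) = (\<integral>U. (G U :: real) \<partial>M)"
proof -
  have m: "(\<lambda>U. Q ** U) \<in> measurable M borel"
    by (intro meas_M borel_measurable_continuous_onI cont_mult)
  show ?thesis using integral_distr[OF m G] distr_inv[OF Q] by simp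
qed

lemma integrable_invariance:
  assumes Q: "orthogonal_matrix Q" and G: "integrable M (G :: _ \<Rightarrow> real)"
  shows "integrable M (\<lambda>U. G (Q ** U))"
proof -
  have m: "(\<lambda>U. Q ** U) \<in> measurable M borel"
    by (intro meas_M borel_measurable_continuous_onI cont_mult)
  have Gb: "G \<in> borel_measurable borel" using G measurable_cong_sets[OF sets_M refl]
    by (metis borel_measurable_integrable)
  show ?thesis using integrable_distr_eq[OF m Gb] distr_inv[OF Q] G by simp
qed

lemma integrable_bdd:
  assumes "g \<in> borel_measurable M" "AE U in M. \<bar>g U\<bar> \<le> (B::real)"
  shows "integrable M g"
proof -
  interpret prob_space M by (rule Mprob)
  show ?thesis using assms by (intro integrable_const_bound[where B=B]) auto
qed

lemma key:
  fixes K :: "real^'n^'n"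
  assumes sk: "transpose K = - K" and cub: "K ** (K ** K) = - K"
  shows "integrable M (\<lambda>U. f' (trace (A ** U)) * trace (A ** K ** U) * trace (A ** K ** U)
            + f (trace (A ** U)) * trace (A ** (K ** K) ** U))"
    "(\<integral>U. f' (trace (A ** U)) * trace (A ** K ** U) * trace (A ** K ** U)
            + f (trace (A ** U)) * trace (A ** (K ** K) ** U) \<partial>M) = 0"
proof -
  interpret prob_space M by (rule Mprob)
  define w where "w U = trace (A ** U)" for U
  define p where "p U = trace (A ** K ** U)" for U
  define q where "q U = trace (A ** (K ** K) ** U)" for U
  have [measurable]: "w \<in> borel_measurable M" "p \<in> borel_measurable M" "q \<in> borel_measurable M"
    unfolding w_def[abs_def] p_def[abs_def] q_def[abs_def] by measurable
  define C where "C = nrm A + nrm (A ** K) + nrm (A ** (K ** K))"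
  have bnd: "AE U in M. \<bar>w U\<bar> \<le> C \<and> \<bar>p U\<bar> \<le> C \<and> \<bar>q U\<bar> \<le> C"
    using AE_orth
  proof eventually_elim
    case (elim U)
    have "\<bar>w U\<bar> \<le> nrm A" "\<bar>p U\<bar> \<le> nrm (A ** K)" "\<bar>q U\<bar> \<le> nrm (A ** (K ** K))"
      unfolding w_def p_def q_def using trace_bound[OF elim] by auto
    then show ?case unfolding C_def using nrm_nonneg[of A] nrm_nonneg[of "A ** K"]
        nrm_nonneg[of "A ** (K ** K)"] by linarith
  qed
  obtain B where B: "\<And>w p q t. \<bar>w\<bar> \<le> C \<Longrightarrow> \<bar>p\<bar> \<le> C \<Longrightarrow> \<bar>q\<bar> \<le> C \<Longrightarrow> 0 < t \<Longrightarrow>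
     \<bar>(phi f w p q t - phi f w p q 0) / t\<bar> \<le> B"
    using phi_bound[OF df df', of C] by blast
  obtain F where F: "\<And>x. \<bar>x\<bar> \<le> C \<Longrightarrow> \<bar>f x\<bar> \<le> F"
    using cont_bound[OF cf, of C] by blast
  define G where "G V = f (w V) * p V" for V
  have Gm: "G \<in> borel_measurable borel"
    unfolding G_def w_def p_def
    by (intro borel_measurable_times borel_measurable_continuous_onI continuous_on_compose2[OF cf]
        cont_trace) auto
  have Gi: "integrable M G"
  proof (rule integrable_bdd[where B="F * C"])
    show "G \<in> borel_measurable M" unfolding G_def by measurable
    show "AE U in M. \<bar>G U\<bar> \<le> F * C"
      using bnd
    proof eventually_elim
      case (elim U)
      then have "\<bar>f (w U)\<bar> \<le> F" by (intro F) auto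
      moreover have "0 \<le> F" using F[of 0] elim by force
      ultimately show ?case unfolding G_def using elim by (simp add: abs_mult mult_mono')
    qed
  qed
  have shift: "phi f (w U) (p U) (q U) t = G (Rm K t ** U)" for t U
  proof -
    have e1: "A ** K ** K = A ** (K ** K)" by (simp add: matrix_mul_assoc)
    have e2: "A ** K ** (K ** K) = - (A ** K)"
      by (metis cub matrix_mul_assoc matrix_neg_right)
    have t1: "w (Rm K t ** U) = xx (w U) (p U) (q U) t"
      unfolding w_def p_def q_def xx_def by (rule trace_Rm)
    have "p (Rm K t ** U) = trace (A ** K ** U) + sin t * trace (A ** K ** K ** U)
         + (1 - cos t) * trace (A ** K ** (K ** K) ** U)"
      unfolding p_def by (rule trace_Rm)
    also have "\<dots> = yy (p U) (q U) t"
      unfolding e1 e2 yy_def p_def q_def by (simp add: matrix_neg_left trace_def sum_negf)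
    finally show ?thesis unfolding phi_def G_def t1 by simp
  qed
  define tau where "tau k = inverse (real (Suc k))" for k
  define s where "s k U = (phi f (w U) (p U) (q U) (tau k) - phi f (w U) (p U) (q U) 0) / tau k" for k U
  define D where "D U = f' (w U) * p U * p U + f (w U) * q U" for U
  have phim[measurable]: "(\<lambda>U. phi f (w U) (p U) (q U) t) \<in> borel_measurable M" for t
    unfolding phi_def xx_def yy_def by measurable
  have phii: "integrable M (\<lambda>U. phi f (w U) (p U) (q U) t)" for t
    unfolding shift using integrable_invariance[OF Rm_orth[OF sk cub] Gi] .
  have phiint: "(\<integral>U. phi f (w U) (p U) (q U) t \<partial>M) = integral\<^sup>L M G" for t
    unfolding shift by (rule invariance[OF Rm_orth[OF sk cub] Gm])
  have s0: "integral\<^sup>L M (s k) = 0" for k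
    unfolding s_def using phii phiint by simp
  have Dm: "D \<in> borel_measurable M" unfolding D_def by measurable
  have sm: "s k \<in> borel_measurable M" for k unfolding s_def by measurable
  have wi: "integrable M (\<lambda>_. B)" by simp
  have limAE: "AE U in M. (\<lambda>k. s k U) \<longlonglongrightarrow> D U"
    unfolding s_def D_def tau_def using phi_lim[OF df] by simp
  have bndAE: "AE U in M. norm (s k U) \<le> B" for k
    using bnd
  proof eventually_elim
    case (elim U)
    then show ?case unfolding s_def tau_def using B by auto
  qed
  have lim: "(\<lambda>k. integral\<^sup>L M (s k)) \<longlonglongrightarrow> integral\<^sup>L M D"
    by (rule integral_dominated_convergence[OF Dm sm wi limAE bndAE])
  have Di: "integrable M D"
    by (rule integrable_dominated_convergence[OF Dm sm wi limAE bndAE])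
  have "integral\<^sup>L M D = 0" using lim s0 by (simp add: LIMSEQ_const_iff)
  then show "(\<integral>U. f' (trace (A ** U)) * trace (A ** K ** U) * trace (A ** K ** U)
            + f (trace (A ** U)) * trace (A ** (K ** K) ** U) \<partial>M) = 0"
    unfolding D_def w_def p_def q_def .
  show "integrable M (\<lambda>U. f' (trace (A ** U)) * trace (A ** K ** U) * trace (A ** K ** U)
            + f (trace (A ** U)) * trace (A ** (K ** K) ** U))"
    using Di unfolding D_def w_def p_def q_def .
qed

end



lemma matrix_diff_ldistrib: "(A ** (B - C)) = (A ** B) - (A ** (C::real^'n^'n))"
  by (simp add: matrix_matrix_mult_def vec_eq_iff sum_subtractf[symmetric] algebra_simps)

lemma transpose_Emat: "transpose (Emat i j) = Emat j i"
  by (simp add: transpose_def Emat_def vec_eq_iff)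

definition Kij :: "'n::finite \<Rightarrow> 'n \<Rightarrow> real^'n^'n" where
  "Kij i j = Emat i j - Emat j i"

lemma transpose_diff: "transpose (A - B) = transpose A - transpose (B::real^'n^'n)"
  by (simp add: transpose_def vec_eq_iff)

lemma Kij_skew: "transpose (Kij i j) = - Kij i j"
  by (simp add: Kij_def transpose_diff transpose_Emat)

lemma Kij_Eii: "i \<noteq> j \<Longrightarrow> Kij i j ** Emat i i = - Emat j i"
  by (simp add: Kij_def matrix_diff_rdistrib Emat_mult)

lemma Kij_Ejj: "i \<noteq> j \<Longrightarrow> Kij i j ** Emat j j = Emat i j"
  by (simp add: Kij_def matrix_diff_rdistrib Emat_mult)

lemma Kij_Eij: "i \<noteq> j \<Longrightarrow> Kij i j ** Emat i j = - Emat j j"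
  by (simp add: Kij_def matrix_diff_rdistrib Emat_mult)

lemma Kij_Eji: "i \<noteq> j \<Longrightarrow> Kij i j ** Emat j i = Emat i i"
  by (simp add: Kij_def matrix_diff_rdistrib Emat_mult)

lemma Kij_sq:
  assumes ij: "i \<noteq> j"
  shows "Kij i j ** Kij i j = - Emat i i - Emat j j"
proof -
  have "Kij i j ** Kij i j = Kij i j ** Emat i j - Kij i j ** Emat j i"
    by (subst (2) Kij_def) (rule matrix_diff_ldistrib)
  also have "\<dots> = - Emat j j - Emat i i" using ij by (simp add: Kij_Eij Kij_Eji)
  also have "\<dots> = - Emat i i - Emat j j" by (simp add: algebra_simps)
  finally show ?thesis .
qed

lemma Kij_cub: "Kij i j ** (Kij i j ** Kij i j) = - Kij i j"
proof (cases "i = j")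
  case True then show ?thesis by (simp add: Kij_def)
next
  case False
  have "Kij i j ** (Kij i j ** Kij i j) = - (Kij i j ** Emat i i) - Kij i j ** Emat j j"
    by (simp only: Kij_sq[OF False] matrix_diff_ldistrib matrix_neg_right)
  also have "\<dots> = - Kij i j" using False by (simp add: Kij_Eii Kij_Ejj) (simp add: Kij_def)
  finally show ?thesis .
qed

lemma trace_diff2: "trace (X - (Y::real^'n^'n)) = trace X - trace Y"
  by (simp add: trace_def sum_subtractf)

lemma trace_neg2: "trace (- (X::real^'n^'n)) = - trace X"
  by (simp add: trace_def sum_negf)

lemma P_eq: "trace (A ** Kij i j ** U) = (U ** A) $ j $ i - (U ** A) $ i $ j"
proof -
  have "trace (A ** Kij i j ** U) = trace (U ** (A ** Kij i j))"
    by (rule trace_mul_sym)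
  also have "\<dots> = trace (U ** A ** Kij i j)"
    by (simp only: matrix_mul_assoc)
  also have "\<dots> = (U ** A) $ j $ i - (U ** A) $ i $ j"
    by (simp add: Kij_def matrix_diff_ldistrib trace_diff2 trace_Emat)
  finally show ?thesis .
qed

lemma Q_eq: "i \<noteq> j \<Longrightarrow> trace (A ** (Kij i j ** Kij i j) ** U) = - (U ** A) $ i $ i - (U ** A) $ j $ j"
proof -
  assume ij: "i \<noteq> j"
  have "trace (A ** (Kij i j ** Kij i j) ** U) = trace (U ** (A ** (Kij i j ** Kij i j)))"
    by (rule trace_mul_sym)
  also have "\<dots> = trace (U ** A ** (Kij i j ** Kij i j))"
    by (simp only: matrix_mul_assoc)
  also have "\<dots> = - (U ** A) $ i $ i - (U ** A) $ j $ j"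
    by (simp add: Kij_sq[OF ij] matrix_diff_ldistrib matrix_neg_right trace_diff2 trace_Emat trace_neg2)
  finally show ?thesis .
qed

lemma remove_sum: "(\<Sum>j\<in>UNIV-{i}. g j) = (\<Sum>j\<in>(UNIV::'n::finite set). g j) - (g i :: real)"
  by (simp add: sum.remove[of UNIV i])

lemma sum_identity:
  fixes A U :: "real^'n^'n"
  assumes orth: "orthogonal_matrix U"
  shows "(\<Sum>i\<in>UNIV. \<Sum>j\<in>UNIV-{i}. a * trace (A ** Kij i j ** U) * trace (A ** Kij i j ** U)
              + b * trace (A ** (Kij i j ** Kij i j) ** U))
     = a * (2 * (trace (A ** transpose A) - trace ((A ** U) ** (A ** U))))
       - b * (2 * (real CARD('n) - 1) * trace (A ** U))"
proof -
  define B where "B = U ** A"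
  have "(\<Sum>i\<in>UNIV. \<Sum>j\<in>UNIV-{i}. a * trace (A ** Kij i j ** U) * trace (A ** Kij i j ** U)
              + b * trace (A ** (Kij i j ** Kij i j) ** U))
     = (\<Sum>i\<in>UNIV. \<Sum>j\<in>UNIV-{i}. a * ((B $ j $ i - B $ i $ j) * (B $ j $ i - B $ i $ j))
              + b * (- B $ i $ i - B $ j $ j))"
    unfolding B_def by (intro sum.cong refl) (auto simp: P_eq Q_eq)
  also have "\<dots> = a * (\<Sum>i\<in>UNIV. \<Sum>j\<in>UNIV-{i}. (B $ j $ i - B $ i $ j) * (B $ j $ i - B $ i $ j))
       + b * (\<Sum>i\<in>UNIV. \<Sum>j\<in>UNIV-{i}. (- B $ i $ i - B $ j $ j))"
    by (simp add: sum.distrib sum_distrib_left)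
  also have "(\<Sum>i\<in>UNIV. \<Sum>j\<in>UNIV-{i}. (B $ j $ i - B $ i $ j) * (B $ j $ i - B $ i $ j))
     = (\<Sum>i\<in>UNIV. \<Sum>j\<in>UNIV. (B $ j $ i - B $ i $ j) * (B $ j $ i - B $ i $ j))"
    by (simp add: remove_sum)
  also have "\<dots> = (\<Sum>i\<in>UNIV. \<Sum>j\<in>UNIV. B $ j $ i * B $ j $ i)
       + (\<Sum>i\<in>UNIV. \<Sum>j\<in>UNIV. B $ i $ j * B $ i $ j)
       - 2 * (\<Sum>i\<in>UNIV. \<Sum>j\<in>UNIV. B $ i $ j * B $ j $ i)"
    by (simp add: sum.distrib sum_subtractf sum_distrib_left algebra_simps)
  also have "(\<Sum>i\<in>UNIV. \<Sum>j\<in>UNIV. B $ j $ i * B $ j $ i)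
       = (\<Sum>i\<in>UNIV. \<Sum>j\<in>UNIV. B $ i $ j * B $ i $ j)"
    by (rule sum.swap)
  also have "(\<Sum>i\<in>UNIV. \<Sum>j\<in>UNIV. B $ i $ j * B $ i $ j) = trace (B ** transpose B)"
    by (simp add: trace_def matrix_matrix_mult_def transpose_def)
  also have "(\<Sum>i\<in>UNIV. \<Sum>j\<in>UNIV. B $ i $ j * B $ j $ i) = trace (B ** B)"
    by (simp add: trace_def matrix_matrix_mult_def)
  also have "(\<Sum>i\<in>UNIV. \<Sum>j\<in>UNIV-{i}. (- B $ i $ i - B $ j $ j))
      = (\<Sum>i\<in>UNIV. (- real CARD('n) * B $ i $ i - trace B + 2 * B $ i $ i))"
    by (intro sum.cong refl) (simp add: remove_sum sum_subtractf sum_negf trace_def algebra_simps)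
  also have "\<dots> = - (2 * (real CARD('n) - 1) * trace B)"
    by (simp add: sum.distrib sum_subtractf sum_distrib_left[symmetric] trace_def algebra_simps)
  also have "trace (B ** transpose B) = trace (A ** transpose A)"
  proof -
    have "trace (B ** transpose B) = trace (U ** (A ** transpose A ** transpose U))"
      unfolding B_def by (simp add: matrix_transpose_mul matrix_mul_assoc)
    also have "\<dots> = trace (A ** transpose A ** transpose U ** U)"
      by (subst trace_mul_sym) (simp only: matrix_mul_assoc)
    also have "\<dots> = trace (A ** transpose A)"
      using orth by (simp add: orthogonal_matrix_def matrix_mul_assoc[symmetric])
    finally show ?thesis .
  qed
  also have "trace (B ** B) = trace ((A ** U) ** (A ** U))"
  proof -
    have "trace (B ** B) = trace (U ** (A ** U ** A))"
      unfolding B_def by (simp only: matrix_mul_assoc)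
    also have "\<dots> = trace (A ** U ** A ** U)"
      by (subst trace_mul_sym) (simp only: matrix_mul_assoc)
    finally show ?thesis by (simp only: matrix_mul_assoc)
  qed
  also have "trace B = trace (A ** U)" unfolding B_def by (rule trace_mul_sym)
  finally show ?thesis by (simp add: algebra_simps)
qed



lemma final_alg:
  fixes n P a b w d :: real
  assumes n: "n - 1 \<noteq> 0" and d: "d = a * (2 * (n - P)) - b * (2 * (n - 1) * w)"
  shows "((P - 1) / (n - 1)) * a = (a - w * b) - (1 / (2 * (n - 1))) * d"
proof -
  have "(1 / (2 * (n - 1))) * d = a * (n - P) / (n - 1) - b * w"
    unfolding d using n by (simp add: field_simps)
  moreover have "a - a * (n - P) / (n - 1) = ((P - 1) / (n - 1)) * a"
    using n by (simp add: field_simps)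
  ultimately show ?thesis by simp
qed

theorem mainTheorem4:
  fixes A :: "real^'n^'n" and M :: "(real^'n^'n) measure"
    and f f' f'' :: "real \<Rightarrow> real"
  assumes n2: "CARD('n) \<ge> 2"
    and trA: "trace (A ** transpose A) = real CARD('n)"
    and haar: "haar_orthogonal M"
    and df: "\<And>x. (f has_real_derivative f' x) (at x)"
    and df': "\<And>x. (f' has_real_derivative f'' x) (at x)"
    and bdd: "\<exists>B. \<forall>x. \<bar>f'' x\<bar> \<le> B"
  shows "(\<integral>U. (f' (trace (A ** U)) - trace (A ** U) * f (trace (A ** U))) \<partial>M)
       = (\<integral>U. ((trace ((A ** U) ** (A ** U)) - 1) / (real CARD('n) - 1))
                 * f' (trace (A ** U)) \<partial>M)"
proof -
  interpret prob_space M by (rule Mprob[OF haar df df'])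
  have wm: "(\<lambda>U. trace (A ** U)) \<in> borel_measurable M" by (rule meas_trace[OF haar df df'])
  have fwm: "(\<lambda>U. f (trace (A ** U))) \<in> borel_measurable M"
    by (rule measurable_compose[OF wm f_meas[OF haar df df']])
  have f'wm: "(\<lambda>U. f' (trace (A ** U))) \<in> borel_measurable M"
    by (rule measurable_compose[OF wm f'_meas[OF haar df df']])
  have n1: "real CARD('n) - 1 > 0" using n2 by simp
  define D where "D i j U = f' (trace (A ** U)) * trace (A ** Kij i j ** U) * trace (A ** Kij i j ** U)
            + f (trace (A ** U)) * trace (A ** (Kij i j ** Kij i j) ** U)" for i j U
  define Ds where "Ds U = (\<Sum>i\<in>UNIV. \<Sum>j\<in>UNIV-{i}. D i j U)" for U
  have Di: "integrable M (D i j)" for i j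
    unfolding D_def[abs_def] by (rule key(1)[OF haar df df' Kij_skew Kij_cub])
  have D0: "integral\<^sup>L M (D i j) = 0" for i j
    unfolding D_def[abs_def] by (rule key(2)[OF haar df df' Kij_skew Kij_cub])
  have Dsi: "integrable M Ds" unfolding Ds_def[abs_def] using Di by auto
  have Ds0: "integral\<^sup>L M Ds = 0"
    unfolding Ds_def using Di D0 by (simp add: integral_sum integrable_sum)
  define L where "L U = f' (trace (A ** U)) - trace (A ** U) * f (trace (A ** U))" for U
  define R where "R U = ((trace ((A ** U) ** (A ** U)) - 1) / (real CARD('n) - 1))
                 * f' (trace (A ** U))" for U
  have p2c: "continuous_on UNIV (\<lambda>U::real^'n^'n. trace ((A ** U) ** (A ** U)))"
    unfolding trace_def matrix_matrix_mult_def by (intro continuous_intros)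
  have p2m: "(\<lambda>U. trace ((A ** U) ** (A ** U))) \<in> borel_measurable M"
    by (intro meas_M[OF haar df df'] borel_measurable_continuous_onI p2c)
  have Lm: "L \<in> borel_measurable M" unfolding L_def[abs_def]
    by (intro borel_measurable_diff borel_measurable_times wm fwm f'wm)
  have Rm: "R \<in> borel_measurable M" unfolding R_def[abs_def]
    by (intro borel_measurable_diff borel_measurable_times borel_measurable_divide
        borel_measurable_const p2m f'wm)
  obtain F0 where F0: "\<And>x. \<bar>x\<bar> \<le> nrm A \<Longrightarrow> \<bar>f x\<bar> \<le> F0"
    using cont_bound[OF cf[OF haar df df'], of "nrm A"] by blast
  obtain F1 where F1: "\<And>x. \<bar>x\<bar> \<le> nrm A \<Longrightarrow> \<bar>f' x\<bar> \<le> F1"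
    using cont_bound[OF cf'[OF haar df df'], of "nrm A"] by blast
  have Li: "integrable M L"
  proof (rule integrable_bdd[OF haar df df' Lm, where B="F1 + nrm A * F0"])
    show "AE U in M. \<bar>L U\<bar> \<le> F1 + nrm A * F0"
      using AE_orth[OF haar df df']
    proof eventually_elim
      case (elim U)
      have w: "\<bar>trace (A ** U)\<bar> \<le> nrm A" by (rule trace_bound[OF elim])
      have a: "\<bar>f' (trace (A ** U))\<bar> \<le> F1" using F1 w .
      have b: "\<bar>f (trace (A ** U))\<bar> \<le> F0" using F0 w .
      have "\<bar>trace (A ** U) * f (trace (A ** U))\<bar> \<le> nrm A * F0"
        unfolding abs_mult using w b by (intro mult_mono) auto
      then show ?case unfolding L_def using a by linarith
    qed
  qed
  have AEeq: "AE U in M. R U = L U - (1 / (2 * (real CARD('n) - 1))) * Ds U"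
    using AE_orth[OF haar df df']
  proof eventually_elim
    case (elim U)
    have "Ds U = f' (trace (A ** U)) * (2 * (real CARD('n) - trace ((A ** U) ** (A ** U))))
       - f (trace (A ** U)) * (2 * (real CARD('n) - 1) * trace (A ** U))"
      unfolding Ds_def D_def using sum_identity[OF elim, of "f' (trace (A ** U))" A "f (trace (A ** U))"] trA
      by simp
    then show ?case unfolding R_def L_def using n1
      by (intro final_alg) (auto simp: algebra_simps)
  qed
  have "integral\<^sup>L M R = integral\<^sup>L M (\<lambda>U. L U - (1 / (2 * (real CARD('n) - 1))) * Ds U)"
    using Rm Lm AEeq borel_measurable_integrable[OF Dsi] by (intro integral_cong_AE) auto
  also have "\<dots> = integral\<^sup>L M L"
    using Li Dsi Ds0 by simp
  finally show ?thesis unfolding L_def R_def by simp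
qed

end
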